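(* Let $R$ be a commutative Noetherian local ring and let $M,N$ be finitely generated $R$-modules. Suppose $M$ is strongly self dual with respect to $N$. Then $\operatorname{End}_R(M)$ admits an $R^*$-algebra structure such that $M_* \cong \operatorname{Hom}_R(M,N)$ as right $\operatorname{End}_R(M)$-modules, where $\operatorname{Hom}_R(M,N)$ is a right $\operatorname{End}_R(M)$-module via precomposition ($g\cdot f = g\circ f$).
   Context: An $R$-algebra $E$ (possibly noncommutative) is an $R^*$-algebra if there is a map of abelian groups $(-)^*:E\to E$ with $(ab)^*=b^*a^*$, $1_E^*=1_E$, $(ra)^*=ra^*$ for $r\in R$, and $a^{**}=a$ for all $a,b\in E$. If $E$ is an $R^*$-algebra and $M$ is a left $E$-module, $M_*$ denotes $M$ regarded as a right $E$-module via $x\cdot f = f^*x$. $M$ is a left module over $\operatorname{End}_R(M)$ via $f\cdot x=f(x)$. An $R$-module $M$ is strongly self dual with respect to an $R$-module $N$ if there is an $R$-module isomorphism $\alpha:M\to\operatorname{Hom}_R(M,N)$ with $\alpha(x)(y)=\alpha(y)(x)$ for all $x,y\in M$. *)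

theory Defs
  imports Complex_Main
begin

definition is_ideal :: "'a::comm_ring_1 set \<Rightarrow> bool" where
  "is_ideal I \<longleftrightarrow> 0 \<in> I \<and> (\<forall>x\<in>I. \<forall>y\<in>I. x + y \<in> I) \<and> (\<forall>r x. x \<in> I \<longrightarrow> r * x \<in> I)"

definition ideal_gen :: "'a::comm_ring_1 set \<Rightarrow> 'a set" where
  "ideal_gen S = {(\<Sum>s\<in>S. c s * s) | c. True}"

definition noetherian_ring :: "'a::comm_ring_1 itself \<Rightarrow> bool" where
  "noetherian_ring _ \<longleftrightarrow>
     (\<forall>I::'a set. is_ideal I \<longrightarrow> (\<exists>S. finite S \<and> S \<subseteq> I \<and> I = ideal_gen S))"

definition maximal_ideal :: "'a::comm_ring_1 set \<Rightarrow> bool" where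
  "maximal_ideal m \<longleftrightarrow> is_ideal m \<and> m \<noteq> UNIV \<and>
     (\<forall>J. is_ideal J \<and> m \<subseteq> J \<longrightarrow> J = m \<or> J = UNIV)"

definition local_ring :: "'a::comm_ring_1 itself \<Rightarrow> bool" where
  "local_ring _ \<longleftrightarrow> (\<exists>!m::'a set. maximal_ideal m)"

definition fin_gen_module :: "('a::comm_ring_1 \<Rightarrow> 'b::ab_group_add \<Rightarrow> 'b) \<Rightarrow> bool" where
  "fin_gen_module s \<longleftrightarrow> (\<exists>S. finite S \<and> module.span s S = UNIV)"

definition Hom :: "('a::comm_ring_1 \<Rightarrow> 'b::ab_group_add \<Rightarrow> 'b) \<Rightarrow> ('a \<Rightarrow> 'c::ab_group_add \<Rightarrow> 'c)
     \<Rightarrow> ('b \<Rightarrow> 'c) set" where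
  "Hom sM sN = {f. module_hom sM sN f}"

definition strongly_self_dual ::
  "('a::comm_ring_1 \<Rightarrow> 'b::ab_group_add \<Rightarrow> 'b) \<Rightarrow> ('a \<Rightarrow> 'c::ab_group_add \<Rightarrow> 'c) \<Rightarrow> bool" where
  "strongly_self_dual sM sN \<longleftrightarrow>
     (\<exists>\<alpha>. bij_betw \<alpha> UNIV (Hom sM sN)
        \<and> (\<forall>x y. \<alpha> (x + y) = (\<lambda>z. \<alpha> x z + \<alpha> y z))
        \<and> (\<forall>r x. \<alpha> (sM r x) = (\<lambda>z. sN r (\<alpha> x z)))
        \<and> (\<forall>x y. \<alpha> x y = \<alpha> y x))"

text \<open>An R^*-algebra structure on End_R(M) = Hom sM sM (product = composition, unit = id,
  R-action r.f = (x |-> r f(x))): an involutive additive anti-homomorphism, R-linear,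
  fixing the identity.\<close>
definition End_star_structure ::
  "('a::comm_ring_1 \<Rightarrow> 'b::ab_group_add \<Rightarrow> 'b) \<Rightarrow> (('b \<Rightarrow> 'b) \<Rightarrow> ('b \<Rightarrow> 'b)) \<Rightarrow> bool" where
  "End_star_structure sM star \<longleftrightarrow>
     (\<forall>f\<in>Hom sM sM. star f \<in> Hom sM sM)
   \<and> (\<forall>f\<in>Hom sM sM. \<forall>g\<in>Hom sM sM. star (\<lambda>x. f x + g x) = (\<lambda>x. star f x + star g x))
   \<and> (\<forall>f\<in>Hom sM sM. \<forall>g\<in>Hom sM sM. star (f \<circ> g) = star g \<circ> star f)
   \<and> star id = id
   \<and> (\<forall>r. \<forall>f\<in>Hom sM sM. star (\<lambda>x. sM r (f x)) = (\<lambda>x. sM r (star f x)))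
   \<and> (\<forall>f\<in>Hom sM sM. star (star f) = f)"

end

theory Submission
  imports Defs
begin

theorem proposition2p5:
  fixes sM :: "'r::comm_ring_1 \<Rightarrow> 'm::ab_group_add \<Rightarrow> 'm"
    and sN :: "'r \<Rightarrow> 'n::ab_group_add \<Rightarrow> 'n"
  assumes "noetherian_ring TYPE('r)" and "local_ring TYPE('r)"
    and "module sM" and "module sN"
    and "fin_gen_module sM" and "fin_gen_module sN"
    and "strongly_self_dual sM sN"
  shows "\<exists>star. End_star_structure sM star \<and>
           (\<exists>\<phi>::'m \<Rightarrow> ('m \<Rightarrow> 'n). bij_betw \<phi> UNIV (Hom sM sN)
              \<and> (\<forall>x y. \<phi> (x + y) = (\<lambda>z. \<phi> x z + \<phi> y z))
              \<and> (\<forall>f\<in>Hom sM sM. \<forall>x. \<phi> (star f x) = \<phi> x \<circ> f))"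
proof -
  obtain \<alpha> :: "'m \<Rightarrow> 'm \<Rightarrow> 'n" where bij: "bij_betw \<alpha> UNIV (Hom sM sN)"
    and add: "\<And>x y. \<alpha> (x + y) = (\<lambda>z. \<alpha> x z + \<alpha> y z)"
    and scl: "\<And>r x. \<alpha> (sM r x) = (\<lambda>z. sN r (\<alpha> x z))"
    and sym: "\<And>x y. \<alpha> x y = \<alpha> y x"
    using assms(7) unfolding strongly_self_dual_def by blast
  have inj: "\<alpha> x = \<alpha> y \<Longrightarrow> x = y" for x y
    using bij unfolding bij_betw_def inj_on_def by blast
  have rng: "range \<alpha> = Hom sM sN" using bij unfolding bij_betw_def by blast
  have ahom: "module_hom sM sN (\<alpha> x)" for x
    using rng unfolding Hom_def by blast
  have ah_add: "\<alpha> x (a + b) = \<alpha> x a + \<alpha> x b" for x a b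
    using ahom[of x] unfolding module_hom_iff by blast
  have ah_scl: "\<alpha> x (sM r a) = sN r (\<alpha> x a)" for x r a
    using ahom[of x] unfolding module_hom_iff by blast
  define star where "star f x = inv_into UNIV \<alpha> (\<alpha> x \<circ> f)" for f :: "'m \<Rightarrow> 'm" and x
  have key: "\<alpha> (star f x) = \<alpha> x \<circ> f" if "f \<in> Hom sM sM" for f x
  proof -
    have fh: "module_hom sM sM f" using that unfolding Hom_def by blast
    have "module_hom sM sN (\<alpha> x \<circ> f)"
      using fh ahom[of x] assms(3,4) unfolding module_hom_iff by (simp add: o_def)
    hence "\<alpha> x \<circ> f \<in> range \<alpha>" using rng unfolding Hom_def by blast
    thus ?thesis unfolding star_def by (rule f_inv_into_f)
  qed
  have fadd: "f (a + b) = f a + f b" if "f \<in> Hom sM sM" for f a b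
    using that unfolding Hom_def module_hom_iff by blast
  have fscl: "f (sM r a) = sM r (f a)" if "f \<in> Hom sM sM" for f r a
    using that unfolding Hom_def module_hom_iff by blast
  have idH: "id \<in> Hom sM sM" using assms(3) unfolding Hom_def module_hom_iff by simp
  have S1: "star f \<in> Hom sM sM" if f: "f \<in> Hom sM sM" for f
  proof -
    have "star f (x + y) = star f x + star f y" for x y
      by (rule inj) (simp add: key[OF f] add fun_eq_iff)
    moreover have "star f (sM r x) = sM r (star f x)" for r x
      by (rule inj) (simp add: key[OF f] scl fun_eq_iff)
    ultimately show ?thesis using assms(3) unfolding Hom_def module_hom_iff by blast
  qed
  have addH: "(\<lambda>x. f x + g x) \<in> Hom sM sM" if "f \<in> Hom sM sM" "g \<in> Hom sM sM" for f g
    using that assms(3) unfolding Hom_def module_hom_iff by (simp add: module.scale_right_distrib)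
  have compH: "f \<circ> g \<in> Hom sM sM" if "f \<in> Hom sM sM" "g \<in> Hom sM sM" for f g
    using that assms(3) unfolding Hom_def module_hom_iff by (simp add: o_def)
  have sclH: "(\<lambda>x. sM r (f x)) \<in> Hom sM sM" if "f \<in> Hom sM sM" for f r
    using that assms(3) unfolding Hom_def module_hom_iff
    by (simp add: module.scale_right_distrib module.scale_scale mult.commute)
  have "End_star_structure sM star"
    unfolding End_star_structure_def
  proof (intro conjI ballI allI)
    fix f assume "f \<in> Hom sM sM" thus "star f \<in> Hom sM sM" by (rule S1)
  next
    fix f g assume f: "f \<in> Hom sM sM" and g: "g \<in> Hom sM sM"
    show "star (\<lambda>x. f x + g x) = (\<lambda>x. star f x + star g x)"
      by (rule ext, rule inj) (simp add: key[OF addH[OF f g]] key[OF f] key[OF g] add ah_add fun_eq_iff)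
    show "star (f \<circ> g) = star g \<circ> star f"
      by (rule ext, rule inj) (simp add: key[OF compH[OF f g]] key[OF f] key[OF g] fun_eq_iff)
  next
    show "star id = id"
      by (rule ext, rule inj) (simp add: key[OF idH])
  next
    fix r f assume f: "f \<in> Hom sM sM"
    show "star (\<lambda>x. sM r (f x)) = (\<lambda>x. sM r (star f x))"
      by (rule ext, rule inj) (simp add: key[OF sclH[OF f]] key[OF f] scl ah_scl fun_eq_iff)
  next
    fix f assume f: "f \<in> Hom sM sM"
    show "star (star f) = f"
    proof (rule ext, rule inj)
      fix x
      show "\<alpha> (star (star f) x) = \<alpha> (f x)"
      proof
        fix z
        have "\<alpha> (star (star f) x) z = \<alpha> x (star f z)" by (simp add: key[OF S1[OF f]])
        also have "\<dots> = \<alpha> (star f z) x" by (rule sym)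
        also have "\<dots> = \<alpha> z (f x)" by (simp add: key[OF f])
        also have "\<dots> = \<alpha> (f x) z" by (rule sym)
        finally show "\<alpha> (star (star f) x) z = \<alpha> (f x) z" .
      qed
    qed
  qed
  thus ?thesis using bij add key by blast
qed

end
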